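(* For every fixed $k\in\mathbb{N}$, the polynomial $h_k$ is weakly distinguishing.
   Context: All graphs are finite and simple. Fix $k\in\mathbb{N}$. For a graph $G$ and $\lambda\in\mathbb{N}$, a proper colouring $f:V(G)\to[\lambda]$ is $k$-harmonious if whenever $\{v_1,\dots,v_k\}$ and $\{u_1,\dots,u_k\}$ are vertex sets inducing complete graphs of size $k$ with $f(\{v_1,\dots,v_k\})=f(\{u_1,\dots,u_k\})$, then $\{v_1,\dots,v_k\}=\{u_1,\dots,u_k\}$. $h_k(G;\lambda)$ is the number of proper $k$-harmonious colourings $f:V(G)\to[\lambda]$; it is a polynomial in $\lambda$. A graph $G$ is $P$-unique if every graph $H$ with $P(G)=P(H)$ is isomorphic to $G$. With $\mathcal{G}(n)$ the set of isomorphism classes of graphs on $n$ vertices and $U_P(n)$ the $P$-unique graphs in $\mathcal{G}(n)$, $P$ is weakly distinguishing if $\lim_{n\to\infty}|U_P(n)|/|\mathcal{G}(n)|=0$. *)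

theory Defs
  imports Complex_Main "HOL-Library.FuncSet"
begin

definition graph_on :: "nat \<Rightarrow> nat set set \<Rightarrow> bool" where
  "graph_on n E \<longleftrightarrow> (\<forall>e\<in>E. e \<subseteq> {..<n} \<and> card e = 2)"

definition iso_graph :: "nat \<Rightarrow> nat set set \<Rightarrow> nat set set \<Rightarrow> bool" where
  "iso_graph n E E' \<longleftrightarrow> (\<exists>\<pi>. bij_betw \<pi> {..<n} {..<n} \<and> E' = (\<lambda>e. \<pi> ` e) ` E)"

definition is_clique :: "nat \<Rightarrow> nat set set \<Rightarrow> nat \<Rightarrow> nat set \<Rightarrow> bool" where
  "is_clique n E k S \<longleftrightarrow> S \<subseteq> {..<n} \<and> card S = k \<and>
     (\<forall>u\<in>S. \<forall>v\<in>S. u \<noteq> v \<longrightarrow> {u, v} \<in> E)"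

definition proper_colouring :: "nat \<Rightarrow> nat set set \<Rightarrow> (nat \<Rightarrow> nat) \<Rightarrow> bool" where
  "proper_colouring n E f \<longleftrightarrow> (\<forall>u<n. \<forall>v<n. {u, v} \<in> E \<longrightarrow> f u \<noteq> f v)"

definition harmonious :: "nat \<Rightarrow> nat \<Rightarrow> nat set set \<Rightarrow> (nat \<Rightarrow> nat) \<Rightarrow> bool" where
  "harmonious k n E f \<longleftrightarrow> (\<forall>S T. is_clique n E k S \<and> is_clique n E k T \<and> f ` S = f ` T \<longrightarrow> S = T)"

text \<open>The polynomial h_k(G) is represented by its value function on the naturals
(a polynomial is determined by its values on infinitely many points).\<close>
definition h_harm :: "nat \<Rightarrow> nat \<Rightarrow> nat set set \<Rightarrow> nat \<Rightarrow> nat" where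
  "h_harm k n E q = card {f \<in> {..<n} \<rightarrow>\<^sub>E {1..q}. proper_colouring n E f \<and> harmonious k n E f}"

definition P_unique :: "(nat \<Rightarrow> nat set set \<Rightarrow> 'b) \<Rightarrow> nat \<Rightarrow> nat set set \<Rightarrow> bool" where
  "P_unique P n E \<longleftrightarrow> (\<forall>m E'. graph_on m E' \<and> P m E' = P n E \<longrightarrow> m = n \<and> iso_graph n E E')"

definition iso_class :: "nat \<Rightarrow> nat set set \<Rightarrow> nat set set set" where
  "iso_class n E = {E'. graph_on n E' \<and> iso_graph n E E'}"

definition graph_classes :: "nat \<Rightarrow> nat set set set set" where
  "graph_classes n = iso_class n ` {E. graph_on n E}"

definition unique_classes :: "(nat \<Rightarrow> nat set set \<Rightarrow> 'b) \<Rightarrow> nat \<Rightarrow> nat set set set set" where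
  "unique_classes P n = iso_class n ` {E. graph_on n E \<and> P_unique P n E}"

definition weakly_distinguishing :: "(nat \<Rightarrow> nat set set \<Rightarrow> 'b) \<Rightarrow> bool" where
  "weakly_distinguishing P \<longleftrightarrow>
     (\<lambda>n. real (card (unique_classes P n)) / real (card (graph_classes n))) \<longlonglongrightarrow> 0"

end

theory Submission
  imports Defs "HOL-Combinatorics.Permutations" "HOL-Real_Asymp.Real_Asymp"
begin


definition Pn :: "nat \<Rightarrow> nat set set" where
  "Pn n = {e. e \<subseteq> {..<n} \<and> card e = 2}"

definition act :: "(nat \<Rightarrow> nat) \<Rightarrow> nat set set \<Rightarrow> nat set set" where
  "act p E = (\<lambda>e. p ` e) ` E"

definition Perms :: "nat \<Rightarrow> (nat \<Rightarrow> nat) set" where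
  "Perms n = {p. p permutes {..<n}}"

definition Aut :: "nat \<Rightarrow> nat set set \<Rightarrow> (nat \<Rightarrow> nat) set" where
  "Aut n E = {p \<in> Perms n. act p E = E}"

lemma finite_Pn: "finite (Pn n)"
  by (rule finite_subset[of _ "Pow {..<n}"]) (auto simp: Pn_def)

lemma graph_on_iff: "graph_on n E \<longleftrightarrow> E \<subseteq> Pn n"
  by (auto simp: graph_on_def Pn_def)

lemma finite_Perms: "finite (Perms n)"
  by (simp add: Perms_def finite_permutations)

lemma card_Perms: "card (Perms n) = fact n"
  by (simp add: Perms_def card_permutations)

lemma id_Perms: "id \<in> Perms n"
  by (simp add: Perms_def permutes_id)

lemma act_id: "act id E = E"
  by (simp add: act_def)

lemma act_comp: "act (p \<circ> q) E = act p (act q E)"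
  by (auto simp: act_def image_comp image_image)

lemma act_cong: "E \<subseteq> Pn n \<Longrightarrow> (\<And>x. x < n \<Longrightarrow> p x = q x) \<Longrightarrow> act p E = act q E"
proof -
  assume E: "E \<subseteq> Pn n" and pq: "\<And>x. x < n \<Longrightarrow> p x = q x"
  have "\<And>e. e \<in> E \<Longrightarrow> p ` e = q ` e"
  proof -
    fix e assume "e \<in> E"
    then have "e \<subseteq> {..<n}" using E by (auto simp: Pn_def)
    then show "p ` e = q ` e" using pq by (auto intro!: image_cong)
  qed
  then show ?thesis unfolding act_def by (auto intro!: image_cong)
qed

lemma Perms_inv: "p \<in> Perms n \<Longrightarrow> inv p \<in> Perms n"
  by (simp add: Perms_def permutes_inv)

lemma Perms_comp: "p \<in> Perms n \<Longrightarrow> q \<in> Perms n \<Longrightarrow> p \<circ> q \<in> Perms n"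
  by (simp add: Perms_def permutes_compose)

lemma act_inv_act: "p \<in> Perms n \<Longrightarrow> act (inv p) (act p E) = E"
  by (metis Perms_def act_comp act_id permutes_inv_o(2) mem_Collect_eq)

lemma act_act_inv: "p \<in> Perms n \<Longrightarrow> act p (act (inv p) E) = E"
  by (metis Perms_def act_comp act_id permutes_inv_o(1) mem_Collect_eq)

lemma act_Pn: "p \<in> Perms n \<Longrightarrow> E \<subseteq> Pn n \<Longrightarrow> act p E \<subseteq> Pn n"
proof
  fix e' assume p: "p \<in> Perms n" and E: "E \<subseteq> Pn n" and "e' \<in> act p E"
  then obtain e where e: "e \<in> E" "e' = p ` e" by (auto simp: act_def)
  have pp: "p permutes {..<n}" using p by (simp add: Perms_def)
  have "e \<subseteq> {..<n}" "card e = 2" using E e by (auto simp: Pn_def)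
  moreover have "inj_on p e" using pp by (meson injD inj_onI permutes_inj)
  moreover have "p ` e \<subseteq> {..<n}" using \<open>e \<subseteq> {..<n}\<close> permutes_in_image[OF pp] by blast
  ultimately show "e' \<in> Pn n" using e
    by (auto simp: Pn_def card_image)
qed

lemma iso_class_eq:
  assumes "E \<subseteq> Pn n"
  shows "iso_class n E = (\<lambda>p. act p E) ` Perms n"
proof
  show "(\<lambda>p. act p E) ` Perms n \<subseteq> iso_class n E"
  proof
    fix E' assume "E' \<in> (\<lambda>p. act p E) ` Perms n"
    then obtain p where p: "p \<in> Perms n" "E' = act p E" by auto
    have "bij_betw p {..<n} {..<n}" using p by (simp add: Perms_def permutes_imp_bij)
    then show "E' \<in> iso_class n E" using p act_Pn[OF p(1) assms]
      by (auto simp: iso_class_def graph_on_iff iso_graph_def act_def)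
  qed
next
  show "iso_class n E \<subseteq> (\<lambda>p. act p E) ` Perms n"
  proof
    fix E' assume "E' \<in> iso_class n E"
    then obtain \<pi> where pi: "bij_betw \<pi> {..<n} {..<n}" "E' = act \<pi> E"
      by (auto simp: iso_class_def iso_graph_def act_def)
    define p where "p = (\<lambda>x. if x < n then \<pi> x else x)"
    have "p permutes {..<n}"
    proof -
      have "bij_betw p {..<n} {..<n}" using pi(1)
        by (smt (verit, best) bij_betw_cong lessThan_iff p_def)
      moreover have "\<And>x. x \<notin> {..<n} \<Longrightarrow> p x = x" by (simp add: p_def)
      ultimately show ?thesis by (intro bij_imp_permutes) auto
    qed
    moreover have "act p E = act \<pi> E" using assms by (rule act_cong) (simp add: p_def)
    ultimately show "E' \<in> (\<lambda>p. act p E) ` Perms n" using pi by (auto simp: Perms_def)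
  qed
qed

lemma orbit_stab:
  assumes E: "E \<subseteq> Pn n"
  shows "card (iso_class n E) * card (Aut n E) = fact n"
proof -
  let ?f = "\<lambda>p. act p E"
  have fib: "card {p \<in> Perms n. ?f p = E'} = card (Aut n E)" if "E' \<in> ?f ` Perms n" for E'
  proof -
    obtain r where r: "r \<in> Perms n" "E' = act r E" using \<open>E' \<in> ?f ` Perms n\<close> by auto
    have "{p \<in> Perms n. ?f p = E'} = (\<lambda>t. r \<circ> t) ` Aut n E"
    proof
      show "(\<lambda>t. r \<circ> t) ` Aut n E \<subseteq> {p \<in> Perms n. ?f p = E'}"
        using r by (auto simp: Aut_def Perms_comp act_comp)
    next
      show "{p \<in> Perms n. ?f p = E'} \<subseteq> (\<lambda>t. r \<circ> t) ` Aut n E"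
      proof
        fix p assume p: "p \<in> {p \<in> Perms n. ?f p = E'}"
        have "inv r \<circ> p \<in> Aut n E"
          using p r by (auto simp: Aut_def Perms_comp Perms_inv act_comp act_inv_act)
        moreover have "r \<circ> (inv r \<circ> p) = p"
          using r(1) by (simp add: Perms_def o_assoc permutes_inv_o(1))
        ultimately show "p \<in> (\<lambda>t. r \<circ> t) ` Aut n E" by (metis image_eqI)
      qed
    qed
    moreover have "inj_on (\<lambda>t. r \<circ> t) (Aut n E)"
    proof (rule inj_onI)
      fix a b assume "r \<circ> a = r \<circ> b"
      then have "inv r \<circ> (r \<circ> a) = inv r \<circ> (r \<circ> b)" by simp
      then show "a = b" using r(1) by (simp add: Perms_def o_assoc permutes_inv_o(2))
    qed
    ultimately show ?thesis by (simp add: card_image)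
  qed
  have "fact n = card (Perms n)" by (simp add: card_Perms)
  also have "\<dots> = (\<Sum>E'\<in>?f ` Perms n. card {p \<in> Perms n. ?f p = E'})"
    unfolding card_eq_sum by (rule sum.image_gen[OF finite_Perms])
  also have "\<dots> = (\<Sum>E'\<in>?f ` Perms n. card (Aut n E))" using fib by simp
  also have "\<dots> = card (iso_class n E) * card (Aut n E)" using iso_class_eq[OF E] by simp
  finally show ?thesis by simp
qed



lemma class_mem: "E \<subseteq> Pn n \<Longrightarrow> E \<in> iso_class n E"
  using iso_class_eq[of E n] id_Perms act_id by (metis image_eqI)

lemma class_eq:
  assumes E: "E \<subseteq> Pn n" and E': "E' \<in> iso_class n E"
  shows "iso_class n E' = iso_class n E"
proof -
  obtain r where r: "r \<in> Perms n" "E' = act r E" using E' iso_class_eq[OF E] by auto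
  have E'P: "E' \<subseteq> Pn n" using act_Pn[OF r(1) E] r by simp
  have "(\<lambda>p. act p E') ` Perms n = (\<lambda>p. act p E) ` Perms n"
  proof
    show "(\<lambda>p. act p E') ` Perms n \<subseteq> (\<lambda>p. act p E) ` Perms n"
      using r by (auto simp: act_comp[symmetric] intro!: image_eqI Perms_comp)
  next
    show "(\<lambda>p. act p E) ` Perms n \<subseteq> (\<lambda>p. act p E') ` Perms n"
    proof
      fix F assume "F \<in> (\<lambda>p. act p E) ` Perms n"
      then obtain p where p: "p \<in> Perms n" "F = act p E" by auto
      have "F = act (p \<circ> inv r) E'" using p r by (simp add: act_comp act_inv_act)
      then show "F \<in> (\<lambda>p. act p E') ` Perms n"
        using p r by (auto intro!: Perms_comp Perms_inv)
    qed
  qed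
  then show ?thesis using iso_class_eq[OF E] iso_class_eq[OF E'P] by simp
qed

lemma finite_iso_class: "E \<subseteq> Pn n \<Longrightarrow> finite (iso_class n E)"
  using iso_class_eq[of E n] finite_Perms by simp

lemma count_classes:
  assumes X: "\<And>E. E \<in> X \<Longrightarrow> E \<subseteq> Pn n"
    and closed: "\<And>E p. E \<in> X \<Longrightarrow> p \<in> Perms n \<Longrightarrow> act p E \<in> X"
  shows "card (iso_class n ` X) * fact n = (\<Sum>E\<in>X. card (Aut n E))"
proof -
  have finX: "finite X"
    by (rule finite_subset[of _ "Pow (Pn n)"]) (use X finite_Pn in auto)
  have inner: "(\<Sum>E\<in>{E\<in>X. iso_class n E = C}. card (Aut n E)) = fact n"
    if C: "C \<in> iso_class n ` X" for C
  proof -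
    obtain E0 where E0: "E0 \<in> X" "C = iso_class n E0" using C by auto
    have E0P: "E0 \<subseteq> Pn n" using X E0 by simp
    have eq: "{E\<in>X. iso_class n E = C} = C"
    proof
      show "{E\<in>X. iso_class n E = C} \<subseteq> C" using X class_mem by blast
    next
      show "C \<subseteq> {E\<in>X. iso_class n E = C}"
      proof
        fix E assume "E \<in> C"
        then obtain p where p: "p \<in> Perms n" "E = act p E0"
          using E0 iso_class_eq[OF E0P] by auto
        have "E \<in> X" using closed[OF E0(1) p(1)] p by simp
        moreover have "iso_class n E = C" using class_eq[OF E0P] \<open>E \<in> C\<close> E0 by simp
        ultimately show "E \<in> {E\<in>X. iso_class n E = C}" by simp
      qed
    qed
    have cpos: "card C > 0"
      using E0 E0P class_mem finite_iso_class card_gt_0_iff by blast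
    have same: "card (Aut n E) = card (Aut n E0)" if "E \<in> C" for E
    proof -
      have EP: "E \<subseteq> Pn n" using that eq X by blast
      have "card C * card (Aut n E) = fact n"
        using orbit_stab[OF EP] class_eq[OF E0P] that E0 by simp
      moreover have "card C * card (Aut n E0) = fact n"
        using orbit_stab[OF E0P] E0 by simp
      ultimately show ?thesis using cpos by (metis mult_left_cancel not_gr0)
    qed
    have "(\<Sum>E\<in>{E\<in>X. iso_class n E = C}. card (Aut n E)) = (\<Sum>E\<in>C. card (Aut n E0))"
      using eq same by simp
    also have "\<dots> = card C * card (Aut n E0)" by simp
    also have "\<dots> = fact n" using orbit_stab[OF E0P] E0 by simp
    finally show ?thesis .
  qed
  have "(\<Sum>E\<in>X. card (Aut n E)) =
        (\<Sum>C\<in>iso_class n ` X. \<Sum>E\<in>{E\<in>X. iso_class n E = C}. card (Aut n E))"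
    by (rule sum.image_gen[OF finX])
  also have "\<dots> = (\<Sum>C\<in>iso_class n ` X. fact n)" using inner by simp
  also have "\<dots> = card (iso_class n ` X) * fact n" by simp
  finally show ?thesis by simp
qed

definition Fix :: "nat \<Rightarrow> (nat \<Rightarrow> nat) \<Rightarrow> nat set set set" where
  "Fix n p = {E. E \<subseteq> Pn n \<and> act p E = E}"

lemma finite_Fix: "finite (Fix n p)"
  by (rule finite_subset[of _ "Pow (Pn n)"]) (use finite_Pn in \<open>auto simp: Fix_def\<close>)

lemma sum_Aut_bound:
  assumes X: "\<And>E. E \<in> X \<Longrightarrow> E \<subseteq> Pn n"
  shows "(\<Sum>E\<in>X. card (Aut n E)) \<le> card X + (\<Sum>p\<in>Perms n - {id}. card (Fix n p))"
proof -
  have finX: "finite X"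
    by (rule finite_subset[of _ "Pow (Pn n)"]) (use X finite_Pn in auto)
  have "(\<Sum>E\<in>X. card (Aut n E)) = (\<Sum>E\<in>X. card {p \<in> Perms n. act p E = E})"
    by (simp add: Aut_def)
  also have "\<dots> = (\<Sum>p\<in>Perms n. card {E \<in> X. act p E = E})"
    using sum.swap_restrict[OF finX finite_Perms, where g="\<lambda>_ _. 1::nat" and R="\<lambda>E p. act p E = E"]
    by simp
  also have "\<dots> = card {E \<in> X. act id E = E} + (\<Sum>p\<in>Perms n - {id}. card {E \<in> X. act p E = E})"
    using sum.remove[OF finite_Perms id_Perms] by blast
  also have "\<dots> \<le> card X + (\<Sum>p\<in>Perms n - {id}. card (Fix n p))"
  proof (rule add_mono)
    show "card {E \<in> X. act id E = E} \<le> card X" using finX by (intro card_mono) auto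
    show "(\<Sum>p\<in>Perms n - {id}. card {E \<in> X. act p E = E}) \<le> (\<Sum>p\<in>Perms n - {id}. card (Fix n p))"
      using X by (intro sum_mono card_mono finite_Fix) (auto simp: Fix_def)
  qed
  finally show ?thesis .
qed



definition goodpair :: "nat \<Rightarrow> nat \<Rightarrow> nat set set \<Rightarrow> nat \<Rightarrow> nat \<Rightarrow> bool" where
  "goodpair k n E u v \<longleftrightarrow> (\<exists>W. W \<subseteq> {..<n} - {u,v} \<and> card W = k - 1 \<and>
     (\<forall>w\<in>W. {u,w} \<in> E \<and> {v,w} \<in> E) \<and> (\<forall>w\<in>W. \<forall>w'\<in>W. w \<noteq> w' \<longrightarrow> {w,w'} \<in> E))"

definition Qk :: "nat \<Rightarrow> nat \<Rightarrow> nat set set \<Rightarrow> bool" where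
  "Qk k n E \<longleftrightarrow> (\<forall>u<n. \<forall>v<n. u \<noteq> v \<longrightarrow> goodpair k n E u v)"

lemma Q_inj:
  assumes k: "k \<ge> 1" and Q: "Qk k n E" and H: "harmonious k n E f"
  shows "inj_on f {..<n}"
proof (rule inj_onI, rule ccontr)
  fix u v assume u: "u \<in> {..<n}" and v: "v \<in> {..<n}" and fe: "f u = f v" and uv: "u \<noteq> v"
  have "goodpair k n E u v" using Q u v uv by (simp add: Qk_def)
  then obtain W where W: "W \<subseteq> {..<n} - {u,v}" "card W = k - 1"
    "\<forall>w\<in>W. {u,w} \<in> E \<and> {v,w} \<in> E" "\<forall>w\<in>W. \<forall>w'\<in>W. w \<noteq> w' \<longrightarrow> {w,w'} \<in> E"
    unfolding goodpair_def by blast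
  have finW: "finite W" using W(1) finite_subset by blast
  have cl: "is_clique n E k (insert x W)" if x: "x = u \<or> x = v" for x
  proof -
    have "x \<notin> W" using W(1) x by blast
    then have "card (insert x W) = k" using finW W(2) k by simp
    moreover have "insert x W \<subseteq> {..<n}" using W(1) x u v by blast
    moreover have "\<forall>a\<in>insert x W. \<forall>b\<in>insert x W. a \<noteq> b \<longrightarrow> {a, b} \<in> E"
    proof (intro ballI impI)
      fix a b assume a: "a \<in> insert x W" and b: "b \<in> insert x W" and ab: "a \<noteq> b"
      have xw: "\<And>w. w \<in> W \<Longrightarrow> {x, w} \<in> E" using W(3) x by blast
      show "{a, b} \<in> E"
      proof (cases "a = x")
        case True
        then have "b \<in> W" using b ab by blast
        then show ?thesis using xw True by blast
      next
        case False
        then have aW: "a \<in> W" using a by blast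
        show ?thesis
        proof (cases "b = x")
          case True
          then have "{x, a} \<in> E" using xw aW by blast
          then show ?thesis using True by (simp add: insert_commute)
        next
          case False
          then have "b \<in> W" using b by blast
          then show ?thesis using W(4) aW ab by blast
        qed
      qed
    qed
    ultimately show ?thesis unfolding is_clique_def by blast
  qed
  have HH: "\<And>S T. is_clique n E k S \<Longrightarrow> is_clique n E k T \<Longrightarrow> f ` S = f ` T \<Longrightarrow> S = T"
    using H unfolding harmonious_def by blast
  have "f ` insert u W = f ` insert v W" using fe by simp
  then have "insert u W = insert v W" using HH cl by blast
  moreover have "u \<notin> insert v W" using W(1) uv by blast
  ultimately show False by blast
qed

lemma inj_good:
  assumes E: "E \<subseteq> Pn n" and inj: "inj_on f {..<n}"
  shows "proper_colouring n E f \<and> harmonious k n E f"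
proof
  show "proper_colouring n E f" unfolding proper_colouring_def
  proof (intro allI impI)
    fix u v assume "u < n" "v < n" "{u, v} \<in> E"
    then have "card {u,v} = 2" using E by (auto simp: Pn_def)
    then have "u \<noteq> v" by auto
    then show "f u \<noteq> f v" using inj \<open>u < n\<close> \<open>v < n\<close> by (auto dest: inj_onD)
  qed
  show "harmonious k n E f" unfolding harmonious_def
  proof (intro allI impI)
    fix S T assume "is_clique n E k S \<and> is_clique n E k T \<and> f ` S = f ` T"
    then have "S \<subseteq> {..<n}" "T \<subseteq> {..<n}" "f ` S = f ` T" unfolding is_clique_def by blast+
    then show "S = T" using inj_on_image_eq_iff[OF inj] by blast
  qed
qed

lemma h_Q:
  assumes k: "k \<ge> 1" and E: "E \<subseteq> Pn n" and Q: "Qk k n E"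
  shows "h_harm k n E = (\<lambda>q. card {f \<in> {..<n} \<rightarrow>\<^sub>E {1..q}. inj_on f {..<n}})"
proof
  fix q
  have "{f \<in> {..<n} \<rightarrow>\<^sub>E {1..q}. proper_colouring n E f \<and> harmonious k n E f}
      = {f \<in> {..<n} \<rightarrow>\<^sub>E {1..q}. inj_on f {..<n}}"
  proof (rule Collect_cong, rule conj_cong[OF refl])
    fix f show "proper_colouring n E f \<and> harmonious k n E f \<longleftrightarrow> inj_on f {..<n}"
      using Q_inj[OF k Q, of f] inj_good[OF E, of f k] by blast
  qed
  then show "h_harm k n E q = card {f \<in> {..<n} \<rightarrow>\<^sub>E {1..q}. inj_on f {..<n}}"
    by (simp add: h_harm_def)
qed

lemma Q_act:
  assumes Q: "Qk k n E" and p: "p \<in> Perms n"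
  shows "Qk k n (act p E)"
  unfolding Qk_def
proof (intro allI impI)
  fix u v assume u: "u < n" and v: "v < n" and uv: "u \<noteq> v"
  have pp: "p permutes {..<n}" using p by (simp add: Perms_def)
  have pinv: "\<And>x. p (inv p x) = x" "\<And>x. inv p (p x) = x"
    using permutes_inverses[OF pp] by auto
  have ip: "inv p permutes {..<n}" using permutes_inv[OF pp] .
  define u0 where "u0 = inv p u"
  define v0 where "v0 = inv p v"
  have u0: "u0 < n" "p u0 = u" using permutes_in_image[OF ip] u pinv by (auto simp: u0_def)
  have v0: "v0 < n" "p v0 = v" using permutes_in_image[OF ip] v pinv by (auto simp: v0_def)
  have "u0 \<noteq> v0" using u0 v0 uv by auto
  then have "goodpair k n E u0 v0" using Q u0 v0 by (simp add: Qk_def)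
  then obtain W where W: "W \<subseteq> {..<n} - {u0,v0}" "card W = k - 1"
    "\<forall>w\<in>W. {u0,w} \<in> E \<and> {v0,w} \<in> E" "\<forall>w\<in>W. \<forall>w'\<in>W. w \<noteq> w' \<longrightarrow> {w,w'} \<in> E"
    unfolding goodpair_def by blast
  have injp: "inj p" using pp permutes_inj by blast
  have mem: "p ` e \<in> act p E" if "e \<in> E" for e using that by (simp add: act_def)
  show "goodpair k n (act p E) u v" unfolding goodpair_def
  proof (intro exI conjI)
    show "p ` W \<subseteq> {..<n} - {u, v}"
    proof
      fix x assume "x \<in> p ` W"
      then obtain w where w: "w \<in> W" "x = p w" by auto
      have "w < n" "w \<noteq> u0" "w \<noteq> v0" using w W(1) by auto
      then have "x < n" using w permutes_in_image[OF pp] by simp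
      moreover have "x \<noteq> u" "x \<noteq> v" using w \<open>w \<noteq> u0\<close> \<open>w \<noteq> v0\<close> u0 v0 injD[OF injp] by metis+
      ultimately show "x \<in> {..<n} - {u, v}" by auto
    qed
    show "card (p ` W) = k - 1" using W(2) injp by (simp add: card_image inj_on_subset)
    show "\<forall>w\<in>p ` W. {u, w} \<in> act p E \<and> {v, w} \<in> act p E"
    proof
      fix w assume "w \<in> p ` W"
      then obtain w0 where w0: "w0 \<in> W" "w = p w0" by auto
      have "{u0, w0} \<in> E" "{v0, w0} \<in> E" using W(3) w0 by auto
      then have "p ` {u0, w0} \<in> act p E" "p ` {v0, w0} \<in> act p E" using mem by blast+
      then show "{u, w} \<in> act p E \<and> {v, w} \<in> act p E" using u0 v0 w0 by simp
    qed
    show "\<forall>w\<in>p ` W. \<forall>w'\<in>p ` W. w \<noteq> w' \<longrightarrow> {w, w'} \<in> act p E"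
    proof (intro ballI impI)
      fix w w' assume "w \<in> p ` W" "w' \<in> p ` W" "w \<noteq> w'"
      then obtain a b where ab: "a \<in> W" "w = p a" "b \<in> W" "w' = p b" by auto
      then have "a \<noteq> b" using \<open>w \<noteq> w'\<close> by auto
      then have "{a, b} \<in> E" using W(4) ab by auto
      then have "p ` {a, b} \<in> act p E" using mem by blast
      then show "{w, w'} \<in> act p E" using ab by simp
    qed
  qed
qed

lemma Q_K: assumes "n \<ge> k + 1" shows "Qk k n (Pn n)"
  unfolding Qk_def goodpair_def
proof (intro allI impI)
  fix u v assume u: "u < n" and v: "v < n" and uv: "u \<noteq> v"
  have "card ({..<n} - {u,v}) \<ge> k - 1"
  proof -
    have "card ({..<n} - {u,v}) = n - 2" using u v uv by (simp add: card_Diff_subset)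
    then show ?thesis using assms by simp
  qed
  then obtain W where W: "W \<subseteq> {..<n} - {u,v}" "card W = k - 1"
    by (meson obtain_subset_with_card_n)
  show "\<exists>W. W \<subseteq> {..<n} - {u, v} \<and> card W = k - 1 \<and>
         (\<forall>w\<in>W. {u, w} \<in> Pn n \<and> {v, w} \<in> Pn n) \<and> (\<forall>w\<in>W. \<forall>w'\<in>W. w \<noteq> w' \<longrightarrow> {w, w'} \<in> Pn n)"
    using W u v by (intro exI[of _ W]) (auto simp: Pn_def card_insert_if)
qed

lemma Q_K': assumes "n \<ge> k + 3" shows "Qk k n (Pn n - {{0,1}})"
  unfolding Qk_def goodpair_def
proof (intro allI impI)
  fix u v assume u: "u < n" and v: "v < n" and uv: "u \<noteq> v"
  have "card ({..<n} - {u,v,0,1}) \<ge> k - 1"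
  proof -
    have "card {u,v,0,1} \<le> 4" by (simp add: card_insert_if)
    moreover have "card ({..<n} - {u,v,0,1}) \<ge> n - card {u,v,0,1}"
      by (metis card_Diff_subset_Int card_lessThan diff_le_mono2 finite.emptyI finite.insertI
           finite_Int card_mono inf_le2 le_refl)
    ultimately show ?thesis using assms by linarith
  qed
  then obtain W where W: "W \<subseteq> {..<n} - {u,v,0,1}" "card W = k - 1"
    by (meson obtain_subset_with_card_n)
  have ne: "\<And>a b. a \<noteq> b \<Longrightarrow> (a \<notin> {0,1} \<or> b \<notin> {0,1}) \<Longrightarrow> {a,b} \<noteq> {0::nat,1}"
    by (simp add: doubleton_eq_iff) blast
  show "\<exists>W. W \<subseteq> {..<n} - {u, v} \<and> card W = k - 1 \<and>
         (\<forall>w\<in>W. {u, w} \<in> Pn n - {{0,1}} \<and> {v, w} \<in> Pn n - {{0,1}}) \<and>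
         (\<forall>w\<in>W. \<forall>w'\<in>W. w \<noteq> w' \<longrightarrow> {w, w'} \<in> Pn n - {{0,1}})"
  proof (intro exI[of _ W] conjI ballI impI)
    show "W \<subseteq> {..<n} - {u, v}" using W by auto
    show "card W = k - 1" using W by simp
    fix w assume w: "w \<in> W"
    have wn: "w < n" "w \<noteq> u" "w \<noteq> v" "w \<notin> {0,1}" using w W by auto
    have pn: "{a, b} \<in> Pn n" if "a < n" "b < n" "a \<noteq> b" for a b
      using that by (auto simp: Pn_def)
    show "{u, w} \<in> Pn n - {{0, 1}}"
      using pn[of u w] ne[of u w] u wn by blast
    show "{v, w} \<in> Pn n - {{0, 1}}"
      using pn[of v w] ne[of v w] v wn by blast
    fix w' assume w': "w' \<in> W" "w \<noteq> w'"
    have "w' < n" using w' W by auto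
    then show "{w, w'} \<in> Pn n - {{0, 1}}"
      using pn[of w w'] ne[of w w'] wn w' by blast
  qed
qed

lemma iso_card:
  assumes E: "E \<subseteq> Pn n" and iso: "iso_graph n E E'"
  shows "card E' = card E"
proof -
  obtain \<pi> where pi: "bij_betw \<pi> {..<n} {..<n}" "E' = (\<lambda>e. \<pi> ` e) ` E"
    using iso by (auto simp: iso_graph_def)
  have "inj_on (\<lambda>e. \<pi> ` e) E"
  proof (rule inj_onI)
    fix a b assume "a \<in> E" "b \<in> E" "\<pi> ` a = \<pi> ` b"
    moreover have "a \<subseteq> {..<n}" "b \<subseteq> {..<n}" using \<open>a \<in> E\<close> \<open>b \<in> E\<close> E by (auto simp: Pn_def)
    ultimately show "a = b" using pi(1) inj_on_image_eq_iff[of \<pi> "{..<n}" a b] by (simp add: bij_betw_def)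
  qed
  then show ?thesis using pi(2) by (simp add: card_image)
qed

lemma unique_not_Q:
  assumes k: "k \<ge> 1" and n: "n \<ge> k + 3" and E: "E \<subseteq> Pn n"
    and U: "P_unique (h_harm k) n E"
  shows "\<not> Qk k n E"
proof
  assume Q: "Qk k n E"
  have K: "Pn n \<subseteq> Pn n" and K': "Pn n - {{0,1}} \<subseteq> Pn n" by auto
  have hK: "h_harm k n (Pn n) = h_harm k n E"
    using h_Q[OF k K Q_K] h_Q[OF k E Q] n by simp
  have hK': "h_harm k n (Pn n - {{0,1}}) = h_harm k n E"
    using h_Q[OF k K' Q_K'] h_Q[OF k E Q] n by simp
  have "iso_graph n E (Pn n)" using U hK K unfolding P_unique_def graph_on_iff by blast
  then have c1: "card (Pn n) = card E" using iso_card[OF E] by simp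
  have "iso_graph n E (Pn n - {{0,1}})" using U hK' K' unfolding P_unique_def graph_on_iff by blast
  then have c2: "card (Pn n - {{0,1}}) = card E" using iso_card[OF E] by simp
  have "{0,1} \<in> Pn n" using n by (auto simp: Pn_def)
  then have "card (Pn n - {{0,1}}) < card (Pn n)" using finite_Pn
    by (meson card_Diff1_less)
  then show False using c1 c2 by linarith
qed

definition Fk :: "nat \<Rightarrow> nat \<Rightarrow> nat set set set" where
  "Fk k n = {E. E \<subseteq> Pn n \<and> \<not> Qk k n E}"

lemma Fk_closed: "E \<in> Fk k n \<Longrightarrow> p \<in> Perms n \<Longrightarrow> act p E \<in> Fk k n"
proof -
  assume E: "E \<in> Fk k n" and p: "p \<in> Perms n"
  have "\<not> Qk k n (act p E)"
  proof
    assume "Qk k n (act p E)"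
    then have "Qk k n (act (inv p) (act p E))" using Q_act Perms_inv[OF p] by blast
    then show False using E act_inv_act[OF p] by (simp add: Fk_def)
  qed
  then show ?thesis using act_Pn[OF p] E by (simp add: Fk_def)
qed

lemma unique_sub:
  assumes k: "k \<ge> 1" and n: "n \<ge> k + 3"
  shows "unique_classes (h_harm k) n \<subseteq> iso_class n ` Fk k n"
  using unique_not_Q[OF k n] unfolding unique_classes_def Fk_def graph_on_iff by blast



lemma fix_D_bound:
  assumes U: "finite U" and inj: "inj_on \<sigma> U" and sU: "\<sigma> ` U \<subseteq> U"
    and D: "D \<subseteq> U" and Dn: "\<And>e. e \<in> D \<Longrightarrow> \<sigma> e \<notin> D"
  shows "card {E. E \<subseteq> U \<and> \<sigma> ` E = E} \<le> 2 ^ (card U - card D)"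
proof -
  let ?X = "{E. E \<subseteq> U \<and> \<sigma> ` E = E}"
  have key: "e \<in> E \<longleftrightarrow> \<sigma> e \<in> E" if E: "E \<in> ?X" and e: "e \<in> U" for E e
  proof
    assume "e \<in> E" then show "\<sigma> e \<in> E" using E by blast
  next
    assume "\<sigma> e \<in> E"
    then obtain e' where "e' \<in> E" "\<sigma> e = \<sigma> e'" using E by blast
    moreover have "e' \<in> U" using E \<open>e' \<in> E\<close> by blast
    ultimately show "e \<in> E" using inj e by (metis inj_onD)
  qed
  have "inj_on (\<lambda>E. E - D) ?X"
  proof (rule inj_onI)
    fix E1 E2 assume E1: "E1 \<in> ?X" and E2: "E2 \<in> ?X" and eq: "E1 - D = E2 - D"
    show "E1 = E2"
    proof (rule set_eqI)
      fix e
      show "e \<in> E1 \<longleftrightarrow> e \<in> E2"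
      proof (cases "e \<in> D")
        case True
        then have eU: "e \<in> U" and sD: "\<sigma> e \<notin> D" using D Dn by auto
        have "e \<in> E1 \<longleftrightarrow> \<sigma> e \<in> E1" using key[OF E1 eU] .
        also have "\<dots> \<longleftrightarrow> \<sigma> e \<in> E1 - D" using sD by blast
        also have "\<dots> \<longleftrightarrow> \<sigma> e \<in> E2" using eq sD by blast
        also have "\<dots> \<longleftrightarrow> e \<in> E2" using key[OF E2 eU] by simp
        finally show ?thesis .
      next
        case False
        then show ?thesis using eq by blast
      qed
    qed
  qed
  then have "card ?X = card ((\<lambda>E. E - D) ` ?X)" by (simp add: card_image)
  also have "\<dots> \<le> card (Pow (U - D))"
    by (rule card_mono) (use U in auto)
  also have "\<dots> = 2 ^ (card U - card D)"
    using U D by (simp add: card_Pow card_Diff_subset finite_subset)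
  finally show ?thesis .
qed

lemma Fix_eq: "Fix n p = {E. E \<subseteq> Pn n \<and> (\<lambda>e. p ` e) ` E = E}"
  by (simp add: Fix_def act_def)

lemma max_avoid:
  fixes p :: "nat \<Rightarrow> nat" and n :: nat
  assumes pp: "p permutes {..<n}"
  defines "S \<equiv> {x. p x \<noteq> x}"
  obtains A where "A \<subseteq> S" "A \<inter> p ` A = {}" "card S \<le> 3 * card A"
proof -
  have SU: "S \<subseteq> {..<n}"
  proof
    fix x assume "x \<in> S"
    then have "p x \<noteq> x" by (simp add: S_def)
    then show "x \<in> {..<n}" using permutes_not_in[OF pp, of x] by blast
  qed
  have finS: "finite S" using SU by (rule finite_subset) simp
  have pinv: "\<And>x. p (inv p x) = x" "\<And>x. inv p (p x) = x"
    using permutes_inverses[OF pp] by blast+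
  let ?C = "{A. A \<subseteq> S \<and> A \<inter> p ` A = {}}"
  have finC: "finite ?C" by (rule finite_subset[of _ "Pow S"]) (auto simp: finS)
  have neC: "{} \<in> ?C" by simp
  define m where "m = Max (card ` ?C)"
  have "m \<in> card ` ?C" unfolding m_def using finC neC by (intro Max_in) auto
  then obtain A where A: "A \<in> ?C" "card A = m" by auto
  have maxA: "card B \<le> card A" if "B \<in> ?C" for B
    using A(2) finC that unfolding m_def by (simp add: Max_ge)
  have finA: "finite A" using A(1) finS by (auto intro: finite_subset)
  have cover: "S \<subseteq> A \<union> p ` A \<union> inv p ` A"
  proof
    fix y assume yS: "y \<in> S"
    show "y \<in> A \<union> p ` A \<union> inv p ` A"
    proof (rule ccontr)
      assume "y \<notin> A \<union> p ` A \<union> inv p ` A"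
      then have y: "y \<notin> A" "y \<notin> p ` A" "y \<notin> inv p ` A" by auto
      have py: "p y \<noteq> y" using yS by (simp add: S_def)
      have pyA: "p y \<notin> A"
      proof
        assume "p y \<in> A"
        then have "inv p (p y) \<in> inv p ` A" by blast
        then show False using y(3) pinv by simp
      qed
      have "insert y A \<in> ?C"
      proof -
        have "insert y A \<subseteq> S" using yS A(1) by auto
        moreover have "insert y A \<inter> p ` insert y A = {}"
        proof -
          have "A \<inter> p ` A = {}" using A(1) by simp
          then show ?thesis using y(2) py pyA by (simp add: image_insert)
        qed
        ultimately show ?thesis by simp
      qed
      then have "card (insert y A) \<le> card A" by (rule maxA)
      then show False using y(1) finA by simp
    qed
  qed
  have "card S \<le> card (A \<union> p ` A \<union> inv p ` A)"
    using cover finA by (intro card_mono) auto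
  also have "\<dots> \<le> card A + card (p ` A) + card (inv p ` A)"
    using card_Un_le[of "A \<union> p ` A" "inv p ` A"] card_Un_le[of A "p ` A"] by linarith
  also have "\<dots> \<le> 3 * card A" using card_image_le[OF finA, of p] card_image_le[OF finA, of "inv p"]
    by linarith
  finally show ?thesis using that A(1) by blast
qed

definition r0 :: "nat \<Rightarrow> real" where "r0 n = 2 powr (-(real n - 6)/12)"

lemma sigma_props:
  assumes pp: "p permutes {..<n}"
  shows "inj_on (\<lambda>e. p ` e) (Pn n)" "(\<lambda>e. p ` e) ` Pn n \<subseteq> Pn n"
proof -
  have "inj p" using pp permutes_inj by blast
  then show "inj_on (\<lambda>e. p ` e) (Pn n)" by (simp add: inj_on_def inj_image_eq_iff)
  have "act p (Pn n) \<subseteq> Pn n" using act_Pn[of p n "Pn n"] pp by (simp add: Perms_def)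
  then show "(\<lambda>e. p ` e) ` Pn n \<subseteq> Pn n" by (simp add: act_def)
qed

lemma fix_card_D:
  assumes p: "p \<in> Perms n" and n6: "n \<ge> 6"
  shows "\<exists>D. D \<subseteq> Pn n \<and> card (Fix n p) \<le> 2 ^ (card (Pn n) - card D) \<and>
     real (card {x. p x \<noteq> x}) * (real n - 6) / 12 \<le> real (card D)"
proof -
  have pp: "p permutes {..<n}" using p by (simp add: Perms_def)
  have pinv: "\<And>x. p (inv p x) = x" "\<And>x. inv p (p x) = x"
    using permutes_inverses[OF pp] by blast+
  define S where "S = {x. p x \<noteq> x}"
  obtain A where A: "A \<subseteq> S" "A \<inter> p ` A = {}" "card S \<le> 3 * card A"
    using max_avoid[OF pp] unfolding S_def by blast
  have SU: "S \<subseteq> {..<n}"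
  proof
    fix x assume "x \<in> S"
    then have "p x \<noteq> x" by (simp add: S_def)
    then show "x \<in> {..<n}" using permutes_not_in[OF pp, of x] by blast
  qed
  have finS: "finite S" using SU by (rule finite_subset) simp
  have finA: "finite A" using A(1) finS by (auto intro: finite_subset)
  have sn: "card S \<le> n" using card_mono[OF _ SU] by simp
  define t where "t = min (card A) (n div 6)"
  have "t \<le> card A" by (simp add: t_def)
  then obtain A' where A': "A' \<subseteq> A" "card A' = t" by (meson obtain_subset_with_card_n)
  have finA': "finite A'" using A'(1) finA by (auto intro: finite_subset)
  have A'n: "A' \<subseteq> {..<n}" using A'(1) A(1) SU by blast
  have A'd: "A' \<inter> p ` A' = {}" using A(2) A'(1) by blast
  define Y where "Y = A' \<union> p ` A' \<union> inv p ` A'"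
  define X where "X = {..<n} - Y"
  have cY: "card Y \<le> 3 * t"
  proof -
    have "card Y \<le> card A' + card (p ` A') + card (inv p ` A')"
      unfolding Y_def using card_Un_le[of "A' \<union> p ` A'" "inv p ` A'"] card_Un_le[of A' "p ` A'"]
      by linarith
    then show ?thesis using card_image_le[OF finA', of p] card_image_le[OF finA', of "inv p"] A'(2)
      by linarith
  qed
  have finY: "finite Y" unfolding Y_def using finA' by simp
  have cX: "card X \<ge> n - 3 * t"
  proof -
    have "card {..<n} - card Y \<le> card ({..<n} - Y)" by (rule diff_card_le_card_Diff[OF finY])
    then show ?thesis using cY unfolding X_def by simp
  qed
  have finX: "finite X" unfolding X_def by simp
  define D where "D = (\<lambda>(a,x). {a,x}) ` (A' \<times> X)"
  have injD: "inj_on (\<lambda>(a,x). {a,x}) (A' \<times> X)"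
  proof (rule inj_onI, clarify)
    fix a x a2 x2 assume a: "a \<in> A'" "x \<in> X" "a2 \<in> A'" "x2 \<in> X" and eq: "{a, x} = {a2, x2}"
    have "x \<notin> A'" "x2 \<notin> A'" using a by (auto simp: X_def Y_def)
    then show "a = a2 \<and> x = x2" using eq a by (metis doubleton_eq_iff)
  qed
  have cD: "card D = t * card X"
    unfolding D_def using card_image[OF injD] A'(2) by (simp add: card_cartesian_product)
  have DP: "D \<subseteq> Pn n"
  proof
    fix e assume "e \<in> D"
    then obtain a x where ax: "a \<in> A'" "x \<in> X" "e = {a, x}" by (auto simp: D_def)
    have "a \<noteq> x" using ax by (auto simp: X_def Y_def)
    moreover have "a < n" "x < n" using ax A'n by (auto simp: X_def)
    ultimately show "e \<in> Pn n" using ax by (simp add: Pn_def)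
  qed
  have Dn: "(\<lambda>e. p ` e) e \<notin> D" if "e \<in> D" for e
  proof
    assume "(\<lambda>e. p ` e) e \<in> D"
    obtain a x where ax: "a \<in> A'" "x \<in> X" "e = {a, x}" using \<open>e \<in> D\<close> by (auto simp: D_def)
    then have "{p a, p x} \<in> D" using \<open>(\<lambda>e. p ` e) e \<in> D\<close> by simp
    then obtain a2 x2 where a2: "a2 \<in> A'" "x2 \<in> X" "{p a, p x} = {a2, x2}" by (auto simp: D_def)
    then have "a2 = p a \<or> a2 = p x" by (metis doubleton_eq_iff)
    then show False
    proof
      assume "a2 = p a"
      then show False using a2(1) ax(1) A'd by blast
    next
      assume "a2 = p x"
      then have "x = inv p a2" using pinv by simp
      then have "x \<in> Y" using a2(1) by (simp add: Y_def)
      then show False using ax(2) by (simp add: X_def)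
    qed
  qed
  have "card (Fix n p) \<le> 2 ^ (card (Pn n) - card D)"
    unfolding Fix_eq
    by (rule fix_D_bound[OF finite_Pn sigma_props[OF pp] DP Dn])
  moreover have "real (card S) * (real n - 6) / 12 \<le> real (card D)"
  proof -
    have t6: "6 * t \<le> n" unfolding t_def by linarith
    have "real (card X) \<ge> real n / 2" using cX t6 by linarith
    then have "real t * (real n / 2) \<le> real t * real (card X)"
      by (intro mult_left_mono) auto
    then have cDr: "real (card D) \<ge> real t * (real n / 2)"
      using cD by simp
    have "real (card S) * (real n - 6) / 12 \<le> real t * (real n / 2)"
    proof (cases "t = card A")
      case True
      then have "real (card S) \<le> 3 * real t" using A(3) by linarith
      then have "real (card S) * (real n - 6) \<le> (3 * real t) * (real n - 6)"
        using n6 by (intro mult_right_mono) auto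
      moreover have "(3 * real t) * (real n - 6) \<le> 6 * (real t * real n)"
        by (simp add: algebra_simps)
      ultimately have "real (card S) * (real n - 6) \<le> 6 * (real t * real n)"
        by (rule order_trans)
      then have "real (card S) * (real n - 6) / 12 \<le> 6 * (real t * real n) / 12"
        by (rule divide_right_mono) simp
      then show ?thesis by (simp add: mult.commute mult.left_commute)
    next
      case False
      then have tt: "t = n div 6" unfolding t_def by linarith
      have "n - 5 \<le> 6 * (n div 6)" by linarith
      then have t5: "real n - 5 \<le> 6 * real t" using tt by linarith
      have "real (card S) * (real n - 6) \<le> real n * (real n - 6)"
        using sn n6 by (intro mult_right_mono) auto
      also have "\<dots> \<le> (real n - 5) * real n" by (simp add: algebra_simps)
      also have "\<dots> \<le> (6 * real t) * real n" using t5 by (intro mult_right_mono) auto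
      finally have "real (card S) * (real n - 6) / 12 \<le> (6 * real t) * real n / 12"
        by (rule divide_right_mono) simp
      then show ?thesis by (simp add: mult.commute mult.left_commute)
    qed
    then show ?thesis using cDr by linarith
  qed
  ultimately show ?thesis using DP unfolding S_def by blast
qed

lemma fix_bound:
  assumes p: "p \<in> Perms n" and n6: "n \<ge> 6"
  shows "real (card (Fix n p)) \<le> 2 ^ card (Pn n) * r0 n ^ card {x. p x \<noteq> x}"
proof -
  obtain D where D: "D \<subseteq> Pn n" "card (Fix n p) \<le> 2 ^ (card (Pn n) - card D)"
    "real (card {x. p x \<noteq> x}) * (real n - 6) / 12 \<le> real (card D)"
    using fix_card_D[OF p n6] by blast
  define s where "s = card {x. p x \<noteq> x}"
  have cDP: "card D \<le> card (Pn n)" using D(1) finite_Pn by (simp add: card_mono)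
  have "real (card (Fix n p)) \<le> 2 ^ (card (Pn n) - card D)"
    using D(2) by (metis of_nat_le_iff of_nat_numeral of_nat_power)
  also have "\<dots> = 2 ^ card (Pn n) / 2 ^ card D"
    using cDP by (simp add: power_diff)
  also have "\<dots> = 2 ^ card (Pn n) * 2 powr (- real (card D))"
    by (simp add: powr_minus divide_inverse powr_realpow)
  also have "\<dots> \<le> 2 ^ card (Pn n) * 2 powr (- (real s * (real n - 6) / 12))"
    using D(3) unfolding s_def by (intro mult_left_mono) auto
  also have "2 powr (- (real s * (real n - 6) / 12)) = r0 n ^ s"
  proof -
    have e3: "(- (real n - 6) / 12) * real s = - (real s * (real n - 6) / 12)" by (simp add: field_simps)
    have "r0 n ^ s = r0 n powr real s" unfolding r0_def by (simp add: powr_realpow)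
    also have "\<dots> = 2 powr ((- (real n - 6) / 12) * real s)" unfolding r0_def powr_powr ..
    also have "\<dots> = 2 powr (- (real s * (real n - 6) / 12))" unfolding e3 ..
    finally show ?thesis by simp
  qed
  finally show ?thesis unfolding s_def .
qed



lemma W_eq:
  fixes r :: real
  assumes "p \<in> Perms n"
  shows "r ^ card {x. p x \<noteq> x} = (\<Prod>x\<in>{..<n}. if p x = x then 1 else r)"
proof -
  have pp: "p permutes {..<n}" using assms by (simp add: Perms_def)
  have "{x. p x \<noteq> x} = {x \<in> {..<n}. p x \<noteq> x}"
    using permutes_not_in[OF pp] by auto
  then have "r ^ card {x. p x \<noteq> x} = (\<Prod>x\<in>{x \<in> {..<n}. p x \<noteq> x}. r)" by simp
  also have "\<dots> = (\<Prod>x\<in>{..<n}. if p x \<noteq> x then r else 1)"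
    by (rule prod.inter_filter) simp
  also have "\<dots> = (\<Prod>x\<in>{..<n}. if p x = x then 1 else r)"
    by (intro prod.cong) auto
  finally show ?thesis .
qed

lemma sum_W_bound:
  fixes r :: real
  assumes r: "r \<ge> 0"
  shows "(\<Sum>p\<in>Perms n - {id}. r ^ card {x. p x \<noteq> x}) \<le> (1 + (real n - 1) * r) ^ n - 1"
proof -
  define W where "W = (\<lambda>g. \<Prod>x\<in>{..<n}. if g x = x then 1 else r)"
  define R where "R = (\<lambda>p::nat\<Rightarrow>nat. restrict p {..<n})"
  have Wnn: "W g \<ge> 0" for g unfolding W_def using r by (intro prod_nonneg) auto
  have WR: "W (R p) = W p" for p unfolding W_def R_def by (intro prod.cong) auto
  have injR: "inj_on R (Perms n)"
  proof (rule inj_onI)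
    fix p q assume p: "p \<in> Perms n" and q: "q \<in> Perms n" and eq: "R p = R q"
    have pp: "p permutes {..<n}" and qq: "q permutes {..<n}" using p q by (auto simp: Perms_def)
    show "p = q"
    proof
      fix x
      show "p x = q x"
      proof (cases "x < n")
        case True
        then show ?thesis using fun_cong[OF eq, of x] by (simp add: R_def)
      next
        case False
        then show ?thesis using permutes_not_in[OF pp, of x] permutes_not_in[OF qq, of x] by simp
      qed
    qed
  qed
  let ?P = "PiE {..<n} (\<lambda>_. {..<n})"
  have finP: "finite ?P" by (simp add: finite_PiE)
  have Rsub: "R ` (Perms n - {id}) \<subseteq> ?P - {R id}"
  proof
    fix g assume "g \<in> R ` (Perms n - {id})"
    then obtain p where p: "p \<in> Perms n" "p \<noteq> id" "g = R p" by auto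
    have pp: "p permutes {..<n}" using p by (simp add: Perms_def)
    have "g \<in> ?P" using p(3) permutes_in_image[OF pp] by (auto simp: R_def)
    moreover have "g \<noteq> R id" using injR p id_Perms by (metis inj_on_eq_iff)
    ultimately show "g \<in> ?P - {R id}" by simp
  qed
  have "(\<Sum>p\<in>Perms n - {id}. r ^ card {x. p x \<noteq> x}) = (\<Sum>p\<in>Perms n - {id}. W p)"
    using W_eq unfolding W_def by (intro sum.cong) auto
  also have "\<dots> = (\<Sum>p\<in>Perms n - {id}. W (R p))" using WR by simp
  also have "\<dots> = (\<Sum>g\<in>R ` (Perms n - {id}). W g)"
    by (rule sum.reindex[symmetric, unfolded comp_def]) (use injR in \<open>auto intro: inj_on_subset\<close>)
  also have "\<dots> \<le> (\<Sum>g\<in>?P - {R id}. W g)"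
    using Rsub finP Wnn by (intro sum_mono2) auto
  also have "\<dots> = (\<Sum>g\<in>?P. W g) - W (R id)"
  proof -
    have "R id \<in> ?P" by (auto simp: R_def)
    then show ?thesis using finP by (simp add: sum_diff1)
  qed
  also have "W (R id) = 1" unfolding WR by (simp add: W_def)
  also have "(\<Sum>g\<in>?P. W g) = (\<Prod>x\<in>{..<n}. \<Sum>a\<in>{..<n}. if a = x then 1 else r)"
    unfolding W_def by (rule prod_sum_PiE[symmetric]) auto
  also have "\<dots> = (\<Prod>x\<in>{..<n}. 1 + (real n - 1) * r)"
  proof (rule prod.cong[OF refl])
    fix x assume x: "x \<in> {..<n}"
    have "(\<Sum>a\<in>{..<n}. if a = x then 1 else r) = (\<Sum>a\<in>{..<n}. r + (if a = x then 1 - r else 0))"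
      by (intro sum.cong) auto
    also have "\<dots> = real n * r + (1 - r)" using x by (simp add: sum.distrib)
    also have "\<dots> = 1 + (real n - 1) * r" by (simp add: algebra_simps)
    finally show "(\<Sum>a\<in>{..<n}. if a = x then 1 else r) = 1 + (real n - 1) * r" .
  qed
  also have "\<dots> = (1 + (real n - 1) * r) ^ n" by simp
  finally show ?thesis .
qed

lemma sum_Fix_bound:
  assumes n6: "n \<ge> 6"
  shows "real (\<Sum>p\<in>Perms n - {id}. card (Fix n p)) \<le> 2 ^ card (Pn n) * ((1 + (real n - 1) * r0 n) ^ n - 1)"
proof -
  have "real (\<Sum>p\<in>Perms n - {id}. card (Fix n p)) = (\<Sum>p\<in>Perms n - {id}. real (card (Fix n p)))"
    by simp
  also have "\<dots> \<le> (\<Sum>p\<in>Perms n - {id}. 2 ^ card (Pn n) * r0 n ^ card {x. p x \<noteq> x})"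
    using fix_bound n6 by (intro sum_mono) auto
  also have "\<dots> = 2 ^ card (Pn n) * (\<Sum>p\<in>Perms n - {id}. r0 n ^ card {x. p x \<noteq> x})"
    by (simp add: sum_distrib_left)
  also have "\<dots> \<le> 2 ^ card (Pn n) * ((1 + (real n - 1) * r0 n) ^ n - 1)"
    by (intro mult_left_mono sum_W_bound) (auto simp: r0_def)
  finally show ?thesis .
qed



lemma block_step:
  assumes U: "finite U" and Sm: "Sm \<subseteq> U"
    and disj: "\<And>i. i < m \<Longrightarrow> S i \<inter> Sm = {}"
  defines "A \<equiv> {E. E \<subseteq> U \<and> (\<forall>i<m. \<not> S i \<subseteq> E)}"
  shows "card {E \<in> A. Sm \<subseteq> E} * 2 ^ card Sm = card A"
proof -
  let ?B = "{E \<in> A. Sm \<subseteq> E}"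
  define f where "f = (\<lambda>(E, T). (E - Sm) \<union> (T::'a set))"
  have finSm: "finite Sm" using Sm U finite_subset by blast
  have finA: "finite A" unfolding A_def by (rule finite_subset[of _ "Pow U"]) (auto simp: U)
  have inj: "inj_on f (?B \<times> Pow Sm)"
  proof (rule inj_onI)
    fix x y assume x: "x \<in> ?B \<times> Pow Sm" and y: "y \<in> ?B \<times> Pow Sm" and eq: "f x = f y"
    obtain E1 T1 where x1: "x = (E1, T1)" by (cases x)
    obtain E2 T2 where y2: "y = (E2, T2)" by (cases y)
    have 1: "E1 \<in> ?B" "T1 \<subseteq> Sm" using x x1 by auto
    have 2: "E2 \<in> ?B" "T2 \<subseteq> Sm" using y y2 by auto
    have "T1 = f (E1, T1) \<inter> Sm" "T2 = f (E2, T2) \<inter> Sm" using 1 2 by (auto simp: f_def)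
    moreover have "E1 = f (E1, T1) \<union> Sm" "E2 = f (E2, T2) \<union> Sm" using 1 2 by (auto simp: f_def)
    ultimately show "x = y" using eq x1 y2 by metis
  qed
  have img: "f ` (?B \<times> Pow Sm) = A"
  proof
    show "f ` (?B \<times> Pow Sm) \<subseteq> A"
    proof
      fix y assume "y \<in> f ` (?B \<times> Pow Sm)"
      then obtain E T where E: "E \<in> ?B" and T: "T \<in> Pow Sm" and y: "y = f (E, T)" by auto
      have "E - Sm \<union> T \<subseteq> U" using E T Sm by (auto simp: A_def)
      moreover have "\<not> S i \<subseteq> E - Sm \<union> T" if i: "i < m" for i
      proof
        assume "S i \<subseteq> E - Sm \<union> T"
        then have "S i \<subseteq> E" using disj[OF i] T by blast
        then show False using E i by (auto simp: A_def)
      qed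
      ultimately show "y \<in> A" using y by (simp add: A_def f_def)
    qed
  next
    show "A \<subseteq> f ` (?B \<times> Pow Sm)"
    proof
      fix E assume E: "E \<in> A"
      have "E \<union> Sm \<in> ?B"
      proof -
        have "E \<union> Sm \<subseteq> U" using E Sm by (auto simp: A_def)
        moreover have "\<not> S i \<subseteq> E \<union> Sm" if i: "i < m" for i
        proof
          assume "S i \<subseteq> E \<union> Sm"
          then have "S i \<subseteq> E" using disj[OF i] by blast
          then show False using E i by (auto simp: A_def)
        qed
        ultimately show ?thesis by (simp add: A_def)
      qed
      moreover have "E \<inter> Sm \<in> Pow Sm" by simp
      moreover have "E = f (E \<union> Sm, E \<inter> Sm)" by (auto simp: f_def)
      ultimately show "E \<in> f ` (?B \<times> Pow Sm)" by blast
    qed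
  qed
  have "card A = card (?B \<times> Pow Sm)" using card_image[OF inj] img by simp
  also have "\<dots> = card ?B * 2 ^ card Sm" using finSm by (simp add: card_cartesian_product card_Pow)
  finally show ?thesis by simp
qed

lemma block_count:
  assumes U: "finite U"
    and Ssub: "\<And>i. i < m \<Longrightarrow> S i \<subseteq> U"
    and Scard: "\<And>i. i < m \<Longrightarrow> card (S i) = e"
    and disj: "\<And>i j. i < m \<Longrightarrow> j < m \<Longrightarrow> i \<noteq> j \<Longrightarrow> S i \<inter> S j = {}"
  shows "real (card {E. E \<subseteq> U \<and> (\<forall>i<m. \<not> S i \<subseteq> E)}) = 2 ^ card U * (1 - 1 / 2 ^ e) ^ m"
  using Ssub Scard disj
proof (induction m)
  case 0
  have "{E. E \<subseteq> U \<and> (\<forall>i<0. \<not> S i \<subseteq> E)} = Pow U" by auto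
  then show ?case using U by (simp add: card_Pow)
next
  case (Suc m)
  define A where "A = {E. E \<subseteq> U \<and> (\<forall>i<m. \<not> S i \<subseteq> E)}"
  have IH: "real (card A) = 2 ^ card U * (1 - 1 / 2 ^ e) ^ m"
    unfolding A_def using Suc.prems by (intro Suc.IH) auto
  have finA: "finite A" unfolding A_def by (rule finite_subset[of _ "Pow U"]) (auto simp: U)
  have step: "card {E \<in> A. S m \<subseteq> E} * 2 ^ card (S m) = card A"
    unfolding A_def by (rule block_step[OF U]) (use Suc.prems in auto)
  have eq: "{E. E \<subseteq> U \<and> (\<forall>i<Suc m. \<not> S i \<subseteq> E)} = A - {E \<in> A. S m \<subseteq> E}"
    unfolding A_def using less_Suc_eq by auto
  have "real (card (A - {E \<in> A. S m \<subseteq> E})) = real (card A) - real (card {E \<in> A. S m \<subseteq> E})"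
    using finA by (subst card_Diff_subset) (auto intro: finite_subset simp: of_nat_diff card_mono)
  also have "real (card {E \<in> A. S m \<subseteq> E}) = real (card A) / 2 ^ e"
    using step Suc.prems(2)[of m] by (simp add: field_simps flip: of_nat_mult)
       (metis of_nat_mult of_nat_numeral of_nat_power)
  finally have "real (card (A - {E \<in> A. S m \<subseteq> E})) = real (card A) * (1 - 1 / 2 ^ e)"
    by (simp add: algebra_simps)
  then show ?case using eq IH by simp
qed



lemma bad_pair_bound:
  assumes k2: "k \<ge> 2" and u: "u < n" and v: "v < n" and uv: "u \<noteq> v"
  shows "real (card {E. E \<subseteq> Pn n \<and> \<not> goodpair k n E u v})
     \<le> 2 ^ card (Pn n) * (1 - 1 / 2 ^ ((k + 1 choose 2) - 1)) ^ ((n - 2) div (k - 1))"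
proof -
  define M where "M = {..<n} - {u, v}"
  have finM: "finite M" by (simp add: M_def)
  have cM: "card M = n - 2" using u v uv by (simp add: M_def card_Diff_subset)
  obtain g where g: "bij_betw g {0..<card M} M" using ex_bij_betw_nat_finite[OF finM] by blast
  then have g': "bij_betw g {0..<n-2} M" using cM by simp
  have ginj: "inj_on g {0..<n-2}" and gimg: "g ` {0..<n-2} = M"
    using g' by (auto simp: bij_betw_def)
  define K where "K = k - 1"
  have K1: "K \<ge> 1" using k2 by (simp add: K_def)
  define m where "m = (n - 2) div K"
  define I where "I = (\<lambda>i. {i*K..<i*K+K})"
  define B where "B = (\<lambda>i. g ` I i)"
  define V where "V = (\<lambda>i. insert u (insert v (B i)))"
  define S where "S = (\<lambda>i. {e. e \<subseteq> V i \<and> card e = 2} - {{u,v}})"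
  have Isub: "I i \<subseteq> {0..<n-2}" if i: "i < m" for i
  proof -
    have "Suc i \<le> m" using i by simp
    then have "Suc i * K \<le> m * K" by (rule mult_le_mono1)
    also have "m * K \<le> n - 2" unfolding m_def by (rule div_times_less_eq_dividend)
    finally show ?thesis by (auto simp: I_def)
  qed
  have cI: "card (I i) = K" for i by (simp add: I_def)
  have Bsub: "B i \<subseteq> M" if "i < m" for i using Isub[OF that] gimg by (auto simp: B_def)
  have cB: "card (B i) = K" if "i < m" for i
    using Isub[OF that] ginj cI unfolding B_def by (metis card_image inj_on_subset)
  have finB: "finite (B i)" for i by (simp add: B_def I_def)
  have uvB: "u \<notin> B i" "v \<notin> B i" if "i < m" for i using Bsub[OF that] by (auto simp: M_def)
  have cV: "card (V i) = k + 1" if "i < m" for i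
    using cB[OF that] uvB[OF that] finB uv K1 by (simp add: V_def K_def)
  have Vsub: "V i \<subseteq> {..<n}" if "i < m" for i using Bsub[OF that] u v by (auto simp: V_def M_def)
  have Ssub: "S i \<subseteq> Pn n" if "i < m" for i using Vsub[OF that] by (auto simp: S_def Pn_def)
  have Scard: "card (S i) = (k + 1 choose 2) - 1" if "i < m" for i
  proof -
    have finV: "finite (V i)" using finB by (simp add: V_def)
    have "{u,v} \<in> {e. e \<subseteq> V i \<and> card e = 2}" using uv by (auto simp: V_def)
    moreover have "finite {e. e \<subseteq> V i \<and> card e = 2}" using finV by simp
    ultimately have "card (S i) = card {e. e \<subseteq> V i \<and> card e = 2} - 1"
      unfolding S_def by (simp add: card_Diff_singleton)
    then show ?thesis using n_subsets[OF finV, of 2] cV[OF that] by simp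
  qed
  have Idisj: "I i \<inter> I j = {}" if "i \<noteq> j" for i j
  proof -
    have "I a \<inter> I b = {}" if ab: "a < b" for a b
    proof -
      have "Suc a * K \<le> b * K" using ab by (intro mult_le_mono1) simp
      then show ?thesis by (auto simp: I_def)
    qed
    then show ?thesis using that by (metis inf_commute nat_neq_iff)
  qed
  have Bdisj: "B i \<inter> B j = {}" if "i < m" "j < m" "i \<noteq> j" for i j
  proof -
    have "B i \<inter> B j = g ` (I i \<inter> I j)" unfolding B_def
      using inj_on_image_Int[OF ginj Isub[OF that(1)] Isub[OF that(2)]] by simp
    then show ?thesis using Idisj[OF that(3)] by simp
  qed
  have Sdisj: "S i \<inter> S j = {}" if "i < m" "j < m" "i \<noteq> j" for i j
  proof (rule ccontr)
    assume "S i \<inter> S j \<noteq> {}"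
    then obtain e where e: "e \<in> S i" "e \<in> S j" by blast
    have "e \<subseteq> V i \<inter> V j" using e by (auto simp: S_def)
    also have "V i \<inter> V j \<subseteq> {u, v}" using Bdisj[OF that] by (auto simp: V_def)
    finally have "e \<subseteq> {u,v}" .
    moreover have "card e = 2" using e by (auto simp: S_def)
    moreover have "card {u,v} = 2" using uv by simp
    ultimately have "e = {u,v}" by (metis card_subset_eq finite.emptyI finite.insertI)
    then show False using e by (simp add: S_def)
  qed
  have sub: "{E. E \<subseteq> Pn n \<and> \<not> goodpair k n E u v} \<subseteq> {E. E \<subseteq> Pn n \<and> (\<forall>i<m. \<not> S i \<subseteq> E)}"
  proof clarify
    fix E i assume E: "E \<subseteq> Pn n" and ng: "\<not> goodpair k n E u v" and i: "i < m" and SE: "S i \<subseteq> E"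
    have pair: "{a, b} \<in> E" if "a \<in> V i" "b \<in> V i" "a \<noteq> b" "{a,b} \<noteq> {u,v}" for a b
    proof -
      have "{a,b} \<in> S i" using that by (auto simp: S_def)
      then show ?thesis using SE by blast
    qed
    have ne: "{a, b} \<noteq> {u, v}" if "a \<notin> {u,v}" for a b using that by (auto simp: doubleton_eq_iff)
    have "goodpair k n E u v" unfolding goodpair_def
    proof (intro exI[of _ "B i"] conjI ballI impI)
      show "B i \<subseteq> {..<n} - {u, v}" using Bsub[OF i] by (simp add: M_def)
      show "card (B i) = k - 1" using cB[OF i] by (simp add: K_def)
      fix w assume w: "w \<in> B i"
      have wuv: "w \<notin> {u,v}" using w uvB[OF i] by auto
      have wV: "w \<in> V i" using w by (simp add: V_def)
      have uV: "u \<in> V i" and vV: "v \<in> V i" by (auto simp: V_def)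
      show "{u, w} \<in> E" using pair[OF uV wV] wuv ne[OF wuv, of u] by (auto simp: insert_commute)
      show "{v, w} \<in> E" using pair[OF vV wV] wuv ne[OF wuv, of v] by (auto simp: insert_commute)
      fix w' assume w': "w' \<in> B i" "w \<noteq> w'"
      have "w' \<in> V i" using w' by (simp add: V_def)
      then show "{w, w'} \<in> E" using pair[OF wV] w' ne[OF wuv] by blast
    qed
    then show False using ng by simp
  qed
  have "real (card {E. E \<subseteq> Pn n \<and> \<not> goodpair k n E u v})
      \<le> real (card {E. E \<subseteq> Pn n \<and> (\<forall>i<m. \<not> S i \<subseteq> E)})"
  proof -
    have "finite {E. E \<subseteq> Pn n \<and> (\<forall>i<m. \<not> S i \<subseteq> E)}"
      by (rule finite_subset[of _ "Pow (Pn n)"]) (auto simp: finite_Pn)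
    then show ?thesis using sub by (simp add: card_mono)
  qed
  also have "\<dots> = 2 ^ card (Pn n) * (1 - 1 / 2 ^ ((k + 1 choose 2) - 1)) ^ m"
    by (rule block_count[OF finite_Pn]) (use Ssub Scard Sdisj in auto)
  finally show ?thesis by (simp add: m_def K_def)
qed

lemma F_bound:
  assumes k2: "k \<ge> 2"
  shows "real (card (Fk k n)) \<le> real n ^ 2 * (2 ^ card (Pn n) * (1 - 1 / 2 ^ ((k + 1 choose 2) - 1)) ^ ((n - 2) div (k - 1)))"
proof -
  define b :: real where "b = 2 ^ card (Pn n) * (1 - 1 / 2 ^ ((k + 1 choose 2) - 1)) ^ ((n - 2) div (k - 1))"
  define J where "J = {(u,v). u < n \<and> v < n \<and> u \<noteq> v}"
  define Bad where "Bad = (\<lambda>(u,v). {E. E \<subseteq> Pn n \<and> \<not> goodpair k n E u v})"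
  have J: "J \<subseteq> {..<n} \<times> {..<n}" by (auto simp: J_def)
  have finJ: "finite J" using J finite_subset by blast
  have cJ: "card J \<le> n * n" using card_mono[OF _ J] by (simp add: card_cartesian_product)
  have sub: "Fk k n \<subseteq> (\<Union>x\<in>J. Bad x)"
    by (auto simp: Fk_def Qk_def J_def Bad_def)
  have finBad: "finite (Bad x)" for x
    unfolding Bad_def by (cases x) (auto intro: finite_subset[of _ "Pow (Pn n)"] simp: finite_Pn)
  have "card (Fk k n) \<le> card (\<Union>x\<in>J. Bad x)"
    using sub finJ finBad by (intro card_mono) auto
  also have "\<dots> \<le> (\<Sum>x\<in>J. card (Bad x))" by (rule card_UN_le[OF finJ])
  finally have "real (card (Fk k n)) \<le> (\<Sum>x\<in>J. real (card (Bad x)))"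
    by (metis of_nat_le_iff of_nat_sum)
  also have "\<dots> \<le> (\<Sum>x\<in>J. b)"
  proof (rule sum_mono)
    fix x assume "x \<in> J"
    then obtain u v where x: "x = (u,v)" "u < n" "v < n" "u \<noteq> v" by (auto simp: J_def)
    show "real (card (Bad x)) \<le> b"
      using bad_pair_bound[OF k2 x(2-4)] x(1) by (simp add: Bad_def b_def)
  qed
  also have "\<dots> = real (card J) * b" by simp
  also have "\<dots> \<le> real n ^ 2 * b"
  proof (rule mult_right_mono)
    show "real (card J) \<le> real n ^ 2" using cJ by (simp add: power2_eq_square flip: of_nat_mult)
    show "0 \<le> b" unfolding b_def by (auto intro!: mult_nonneg_nonneg zero_le_power simp: field_simps)
  qed
  finally show ?thesis by (simp add: b_def)
qed



lemma Fk_1_empty: "Fk 1 n = {}"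
proof -
  have "Qk 1 n E" for E
    unfolding Qk_def goodpair_def by (intro allI impI exI[of _ "{}"]) auto
  then show ?thesis by (simp add: Fk_def)
qed

lemma lim_aux: assumes "0 < a" shows "(\<lambda>n::nat. real n ^ 2 * exp (- a * real n)) \<longlonglongrightarrow> 0"
  using assms by real_asymp

lemma F_lim:
  assumes k: "k \<ge> 1"
  shows "(\<lambda>n. real (card (Fk k n)) / 2 ^ card (Pn n)) \<longlonglongrightarrow> 0"
proof (cases "k = 1")
  case True
  then have "\<And>n. Fk k n = {}" using Fk_1_empty by blast
  then show ?thesis by simp
next
  case False
  then have k2: "k \<ge> 2" using k by simp
  define e where "e = (k + 1 choose 2) - 1"
  define d :: real where "d = 1 / 2 ^ e"
  define K where "K = k - 1"
  have K1: "K \<ge> 1" using k2 by (simp add: K_def)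
  have d0: "0 < d" by (simp add: d_def)
  have d1: "d \<le> 1" by (simp add: d_def)
  define a where "a = d / real K"
  define C where "C = exp (d * (2 / real K + 1))"
  have a0: "0 < a" using d0 K1 by (simp add: a_def)
  have g: "(\<lambda>n::nat. C * (real n ^ 2 * exp (- a * real n))) \<longlonglongrightarrow> 0"
    using tendsto_mult_right_zero[OF lim_aux[OF a0]] by simp
  show ?thesis
  proof (rule tendsto_sandwich[OF _ _ tendsto_const g])
    show "\<forall>\<^sub>F n in sequentially. 0 \<le> real (card (Fk k n)) / 2 ^ card (Pn n)"
      by simp
    show "\<forall>\<^sub>F n in sequentially. real (card (Fk k n)) / 2 ^ card (Pn n) \<le> C * (real n ^ 2 * exp (- a * real n))"
    proof (rule eventually_sequentiallyI[of 2])
      fix n :: nat assume n2: "n \<ge> 2"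
      define m where "m = (n - 2) div K"
      have "real (card (Fk k n)) \<le> real n ^ 2 * (2 ^ card (Pn n) * (1 - d) ^ m)"
        using F_bound[OF k2, of n] by (simp add: d_def e_def m_def K_def)
      then have f1: "real (card (Fk k n)) / 2 ^ card (Pn n) \<le> real n ^ 2 * (1 - d) ^ m"
        by (simp add: divide_simps mult.commute mult.left_commute)
      have "(1 - d) ^ m \<le> exp (- d) ^ m"
        using d1 exp_ge_add_one_self[of "-d"] by (intro power_mono) auto
      also have "\<dots> = exp (- d * real m)" by (simp add: exp_of_nat_mult[symmetric] mult.commute)
      also have "\<dots> \<le> exp (- a * real n + d * (2 / real K + 1))"
      proof -
        have dm: "(n - 2) div K * K + (n - 2) mod K = n - 2" by (rule div_mult_mod_eq)
        have "(n - 2) mod K < K" using K1 by simp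
        moreover have e1: "(m + 1) * K = m * K + K" by simp
        ultimately have "n - 2 \<le> (m + 1) * K" using dm unfolding m_def by linarith
        then have "real (n - 2) \<le> real ((m + 1) * K)" by (rule of_nat_mono)
        then have "real n - 2 \<le> (real m + 1) * real K" using n2 by (simp add: of_nat_diff algebra_simps)
        then have "(real n - 2) / real K \<le> real m + 1" using K1 by (simp add: divide_simps)
        then have h0: "d * ((real n - 2) / real K) \<le> d * (real m + 1)" using d0 by (intro mult_left_mono) auto
        have h1: "d * ((real n - 2) / real K) = a * real n - d * (2 / real K)"
          unfolding a_def using K1 by (simp add: field_simps)
        have h2: "d * (2 / real K + 1) = d * (2 / real K) + d" by (simp add: algebra_simps)
        have h3: "d * (real m + 1) = d * real m + d" by (simp add: algebra_simps)
        have "- d * real m \<le> - a * real n + d * (2 / real K + 1)" using h0 unfolding h1 h2 h3 by argo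
        then show ?thesis by simp
      qed
      also have "\<dots> = C * exp (- a * real n)" by (simp add: C_def exp_add[symmetric] add.commute)
      finally have "(1 - d) ^ m \<le> C * exp (- a * real n)" .
      then have "real n ^ 2 * (1 - d) ^ m \<le> real n ^ 2 * (C * exp (- a * real n))"
        by (intro mult_left_mono) auto
      with f1 show "real (card (Fk k n)) / 2 ^ card (Pn n) \<le> C * (real n ^ 2 * exp (- a * real n))"
        by (simp add: mult.commute mult.left_commute)
    qed
  qed
qed

lemma Fix_lim:
  "(\<lambda>n. real (\<Sum>p\<in>Perms n - {id}. card (Fix n p)) / 2 ^ card (Pn n)) \<longlonglongrightarrow> 0"
proof -
  have g: "(\<lambda>n::nat. (1 + (real n - 1) * 2 powr (-(real n - 6)/12)) ^ n - 1) \<longlonglongrightarrow> 0"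
    by real_asymp
  show ?thesis
  proof (rule tendsto_sandwich[OF _ _ tendsto_const g])
    show "\<forall>\<^sub>F n in sequentially. 0 \<le> real (\<Sum>p\<in>Perms n - {id}. card (Fix n p)) / 2 ^ card (Pn n)"
      by (intro always_eventually allI divide_nonneg_nonneg of_nat_0_le_iff zero_le_power) simp
    show "\<forall>\<^sub>F n in sequentially. real (\<Sum>p\<in>Perms n - {id}. card (Fix n p)) / 2 ^ card (Pn n)
        \<le> (1 + (real n - 1) * 2 powr (-(real n - 6)/12)) ^ n - 1"
    proof (rule eventually_sequentiallyI[of 6])
      fix n :: nat assume "n \<ge> 6"
      then show "real (\<Sum>p\<in>Perms n - {id}. card (Fix n p)) / 2 ^ card (Pn n)
        \<le> (1 + (real n - 1) * 2 powr (-(real n - 6)/12)) ^ n - 1"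
        using sum_Fix_bound[of n] unfolding r0_def
        by (simp add: divide_simps mult.commute del: of_nat_sum)
    qed
  qed
qed



lemma ratio_bound:
  assumes k: "k \<ge> 1" and n: "n \<ge> k + 3"
  shows "real (card (unique_classes (h_harm k) n)) / real (card (graph_classes n))
    \<le> real (card (Fk k n)) / 2 ^ card (Pn n)
       + real (\<Sum>p\<in>Perms n - {id}. card (Fix n p)) / 2 ^ card (Pn n)"
proof -
  define F where "F = Fk k n"
  define G where "G = Pow (Pn n)"
  define A where "A = card F + (\<Sum>p\<in>Perms n - {id}. card (Fix n p))"
  define P where "P = card (Pn n)"
  have gc: "graph_classes n = iso_class n ` G"
    unfolding graph_classes_def G_def graph_on_iff by (simp add: Pow_def)
  have finG: "finite G" unfolding G_def by (simp add: finite_Pn)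
  have finF: "finite F" unfolding F_def Fk_def
    by (rule finite_subset[of _ "Pow (Pn n)"]) (auto simp: finite_Pn)
  have hG: "card (iso_class n ` G) * fact n = (\<Sum>E\<in>G. card (Aut n E))"
    by (rule count_classes) (use act_Pn in \<open>auto simp: G_def\<close>)
  have Aut1: "card (Aut n E) \<ge> 1" for E
  proof -
    have "id \<in> Aut n E" by (simp add: Aut_def id_Perms act_id)
    moreover have "finite (Aut n E)" using finite_Perms by (rule finite_subset[rotated]) (auto simp: Aut_def)
    ultimately show ?thesis by (metis One_nat_def Suc_leI card_gt_0_iff empty_iff)
  qed
  have "2 ^ P = card G" unfolding G_def P_def by (simp add: card_Pow finite_Pn)
  also have "\<dots> \<le> (\<Sum>E\<in>G. card (Aut n E))"
    using Aut1 sum_mono[of G "\<lambda>_. 1" "\<lambda>E. card (Aut n E)"] by simp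
  finally have cg: "2 ^ P \<le> card (iso_class n ` G) * fact n" using hG by simp
  have hF: "card (iso_class n ` F) * fact n \<le> A"
  proof -
    have "card (iso_class n ` F) * fact n = (\<Sum>E\<in>F. card (Aut n E))"
    proof (rule count_classes)
      fix E assume "E \<in> F" then show "E \<subseteq> Pn n" by (simp add: F_def Fk_def)
    next
      fix E p assume "E \<in> F" "p \<in> Perms n" then show "act p E \<in> F" unfolding F_def by (rule Fk_closed)
    qed
    also have "\<dots> \<le> A" unfolding A_def by (rule sum_Aut_bound) (auto simp: F_def Fk_def)
    finally show ?thesis .
  qed
  have cu: "card (unique_classes (h_harm k) n) \<le> card (iso_class n ` F)"
    using unique_sub[OF k n] finF unfolding F_def by (intro card_mono) auto
  define cF where "cF = real (card (iso_class n ` F))"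
  define cG where "cG = real (card (iso_class n ` G))"
  define fn where "fn = real (fact n :: nat)"
  have fn0: "fn > 0" by (simp add: fn_def)
  have cG0: "cG * fn \<ge> 2 ^ P" using cg unfolding cG_def fn_def
    by (metis of_nat_le_iff of_nat_mult of_nat_numeral of_nat_power)
  have P0: "(2::real) ^ P > 0" by simp
  then have cGpos: "cG > 0" using cG0 fn0 by (metis not_less mult_nonpos_nonneg order.trans less_imp_le not_le)
  have cFA: "cF * fn \<le> real A" using hF unfolding cF_def fn_def by (metis of_nat_le_iff of_nat_mult)
  have "real (card (unique_classes (h_harm k) n)) / real (card (graph_classes n)) \<le> cF / cG"
    unfolding gc cG_def[symmetric] cF_def using cu cGpos by (intro divide_right_mono) auto
  also have "cF / cG = (cF * fn) / (cG * fn)" using fn0 by simp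
  also have "\<dots> \<le> real A / (cG * fn)" using cFA cGpos fn0 by (intro divide_right_mono) auto
  also have "\<dots> \<le> real A / 2 ^ P"
  proof (rule divide_left_mono)
    show "2 ^ P \<le> cG * fn" by (rule cG0)
    show "0 \<le> real A" by simp
    have "0 < cG * fn" using cGpos fn0 by simp
    then show "0 < cG * fn * 2 ^ P" using P0 by simp
  qed
  also have "\<dots> = real (card (Fk k n)) / 2 ^ card (Pn n)
       + real (\<Sum>p\<in>Perms n - {id}. card (Fix n p)) / 2 ^ card (Pn n)"
    unfolding A_def P_def F_def by (simp add: add_divide_distrib del: of_nat_sum)
  finally show ?thesis .
qed

theorem theorem7:
  fixes k :: nat
  assumes "k \<ge> 1"
  shows "weakly_distinguishing (h_harm k)"
  unfolding weakly_distinguishing_def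
proof (rule tendsto_sandwich[OF _ _ tendsto_const])
  show "(\<lambda>n. real (card (Fk k n)) / 2 ^ card (Pn n)
       + real (\<Sum>p\<in>Perms n - {id}. card (Fix n p)) / 2 ^ card (Pn n)) \<longlonglongrightarrow> 0"
    using tendsto_add[OF F_lim[OF assms] Fix_lim] by simp
  show "\<forall>\<^sub>F n in sequentially. 0 \<le> real (card (unique_classes (h_harm k) n)) / real (card (graph_classes n))"
    by simp
  show "\<forall>\<^sub>F n in sequentially. real (card (unique_classes (h_harm k) n)) / real (card (graph_classes n))
      \<le> real (card (Fk k n)) / 2 ^ card (Pn n)
       + real (\<Sum>p\<in>Perms n - {id}. card (Fix n p)) / 2 ^ card (Pn n)"
    using ratio_bound[OF assms] by (intro eventually_sequentiallyI[of "k + 3"])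
qed

end
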